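(* Let $W_{32,23}$ be the $32\times 32$ matrix $\begin{pmatrix} A & B\\ -B^T & A^T\end{pmatrix}$, where $A$ and $B$ are $16\times 16$ negacirculant matrices with first rows $r_A=(0,1,1,0,-1,1,-1,0,0,0,-1,1,-1,0,1,1)$ and $r_B=(0,1,0,1,1,1,1,-1,0,-1,-1,1,-1,-1,-1,1)$ (a skew-symmetric weighing matrix of order $32$ and weight $23$). Let $C_3(W_{32,23})$ be the ternary code of length $64$ with generator matrix $(I\ \ W_{32,23})$, entries read modulo $3$. Then $A_3(C_3(W_{32,23}))$ contains a $k$-frame for every positive integer $k\ge 3$ that is not of the form $2^{m_1}5^{m_2}7^{m_3}23^{m_4}$ with $m_1,\dots,m_4$ non-negative integers.
   Context: An $N\times N$ negacirculant matrix with first row $(r_0,\dots,r_{N-1})$ is the matrix whose $(i,j)$ entry ($0\le i,j\le N-1$) is $r_{j-i}$ if $j\ge i$ and $-r_{N+j-i}$ if $j<i$. A skew-symmetric weighing matrix of order $n$ and weight $w$ is an $n\times n$ $(0,\pm1)$-matrix $W$ with $W^T=-W$ and $WW^T=wI$. Construction A: with $\rho:\mathbb{Z}_k\to\mathbb{Z}$ sending $0,1,\dots,k-1$ to $0,1,\dots,k-1$, for a $\mathbb{Z}_k$-code $C$ of length $N$ set $A_k(C)=\frac{1}{\sqrt{k}}\{\rho(C)+k\mathbb{Z}^N\}$. A $t$-frame of a lattice in dimension $N$ is a set of $N$ lattice vectors $f_1,\dots,f_N$ with $(f_i,f_j)=t\,\delta_{i,j}$. *)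

theory Defs
  imports Complex_Main
begin

text \<open>Vectors of length N are functions nat => _ vanishing outside {..<N};
  matrices are functions nat => nat => _ read on indices < size.\<close>

definition negacirc :: "nat \<Rightarrow> (nat \<Rightarrow> int) \<Rightarrow> nat \<Rightarrow> nat \<Rightarrow> int" where
  "negacirc N r i j = (if i \<le> j then r (j - i) else - r (N + j - i))"

definition rA :: "int list" where
  "rA = [0,1,1,0,-1,1,-1,0,0,0,-1,1,-1,0,1,1]"

definition rB :: "int list" where
  "rB = [0,1,0,1,1,1,1,-1,0,-1,-1,1,-1,-1,-1,1]"

definition negA :: "nat \<Rightarrow> nat \<Rightarrow> int" where
  "negA = negacirc 16 (\<lambda>k. rA ! k)"

definition negB :: "nat \<Rightarrow> nat \<Rightarrow> int" where
  "negB = negacirc 16 (\<lambda>k. rB ! k)"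

definition W32_23 :: "nat \<Rightarrow> nat \<Rightarrow> int" where
  "W32_23 i j =
     (if i < 16 \<and> j < 16 then negA i j
      else if i < 16 then negB i (j - 16)
      else if j < 16 then - negB j (i - 16)
      else negA (j - 16) (i - 16))"

definition genIW :: "nat \<Rightarrow> nat \<Rightarrow> int" where
  "genIW i j = (if j < 32 then (if i = j then 1 else 0) else W32_23 i (j - 32))"

text \<open>The Z_k-code of length N generated by the n x N integer matrix G (entries read mod k).
  Codewords are represented by their representatives in {0..k-1} (i.e. already as rho(c)).\<close>
definition code_gen :: "int \<Rightarrow> nat \<Rightarrow> nat \<Rightarrow> (nat \<Rightarrow> nat \<Rightarrow> int) \<Rightarrow> (nat \<Rightarrow> int) set" where
  "code_gen k n N G = {c. \<exists>u :: nat \<Rightarrow> int.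
      (\<forall>j<N. c j = (\<Sum>i<n. u i * G i j) mod k) \<and> (\<forall>j\<ge>N. c j = 0)}"

definition C3_W :: "(nat \<Rightarrow> int) set" where
  "C3_W = code_gen 3 32 64 genIW"

definition constrA :: "int \<Rightarrow> nat \<Rightarrow> (nat \<Rightarrow> int) set \<Rightarrow> (nat \<Rightarrow> real) set" where
  "constrA k N C = {x. \<exists>c\<in>C. \<exists>z :: nat \<Rightarrow> int.
      (\<forall>j<N. x j = (of_int (c j) + of_int k * of_int (z j)) / sqrt (of_int k)) \<and>
      (\<forall>j\<ge>N. x j = 0)}"

definition inner_N :: "nat \<Rightarrow> (nat \<Rightarrow> real) \<Rightarrow> (nat \<Rightarrow> real) \<Rightarrow> real" where
  "inner_N N x y = (\<Sum>j<N. x j * y j)"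

definition has_frame :: "nat \<Rightarrow> (nat \<Rightarrow> real) set \<Rightarrow> real \<Rightarrow> bool" where
  "has_frame N L t = (\<exists>f :: nat \<Rightarrow> nat \<Rightarrow> real.
      (\<forall>i<N. f i \<in> L) \<and> (\<forall>i<N. \<forall>j<N. inner_N N (f i) (f j) = (if i = j then t else 0)))"

end

theory Submission
  imports Defs "HOL-Computational_Algebra.Primes"
begin


definition sq4 :: "int \<Rightarrow> bool" where
  "sq4 n \<longleftrightarrow> (\<exists>a b c d. n = a^2 + b^2 + c^2 + d^2)"

lemma sq4I: "n = a^2 + b^2 + c^2 + d^2 \<Longrightarrow> sq4 n"
  unfolding sq4_def by blast

lemma euler4:
  fixes a b c d e f g h :: int
  shows "(a^2+b^2+c^2+d^2)*(e^2+f^2+g^2+h^2) =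
    (a*e+b*f+c*g+d*h)^2 + (a*f-b*e+c*h-d*g)^2 + (a*g-b*h-c*e+d*f)^2 + (a*h+b*g-c*f-d*e)^2"
  by (simp add: power2_eq_square algebra_simps)

lemma sq4_mult: "sq4 x \<Longrightarrow> sq4 y \<Longrightarrow> sq4 (x*y)"
  unfolding sq4_def using euler4 by metis

lemma sq_mod_inj:
  fixes p :: nat and x x' :: nat
  assumes p: "prime p" and hx: "2*x < p" and hx': "2*x' < p"
    and eq: "(int x)^2 mod int p = (int x')^2 mod int p"
  shows "x = x'"
proof -
  have pi: "prime (int p)" using p by simp
  have "int p dvd (int x)^2 - (int x')^2" using eq by (simp add: mod_eq_dvd_iff)
  also have "(int x)^2 - (int x')^2 = (int x - int x') * (int x + int x')"
    by (simp add: power2_eq_square algebra_simps)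
  finally have "int p dvd (int x - int x') \<or> int p dvd (int x + int x')"
    using pi prime_dvd_mult_iff by blast
  then show ?thesis
  proof
    assume d: "int p dvd (int x - int x')"
    show ?thesis
    proof (rule ccontr)
      assume "x \<noteq> x'"
      then have "int x - int x' \<noteq> 0" by simp
      moreover have "\<bar>int x - int x'\<bar> < int p" using hx hx' by linarith
      ultimately show False using d
        by (metis abs_dvd_iff dvd_imp_le_int not_le abs_of_nat)
    qed
  next
    assume d: "int p dvd (int x + int x')"
    show ?thesis
    proof (rule ccontr)
      assume "x \<noteq> x'"
      then have "0 < int x + int x'" by simp
      moreover have "int x + int x' < int p" using hx hx' by linarith
      ultimately show False using d zdvd_not_zless by blast
    qed
  qed
qed

lemma neg_sq_mod_inj:
  fixes p :: nat and x x' :: nat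
  assumes p: "prime p" and hx: "2*x < p" and hx': "2*x' < p"
    and eq: "(-1 - (int x)^2) mod int p = (-1 - (int x')^2) mod int p"
  shows "x = x'"
proof -
  have "int p dvd (-1 - (int x)^2) - (-1 - (int x')^2)" using eq by (simp add: mod_eq_dvd_iff)
  then have "int p dvd (int x')^2 - (int x)^2" by simp
  then have "(int x')^2 mod int p = (int x)^2 mod int p" by (simp add: mod_eq_dvd_iff)
  then show ?thesis using sq_mod_inj[OF p hx' hx] by simp
qed

lemma pigeon:
  fixes p :: nat
  assumes p: "prime p" and od: "odd p"
  shows "\<exists>x y :: nat. 2*x < p \<and> 2*y < p \<and> int p dvd (int x)^2 + (int y)^2 + 1"
proof -
  define h where "h = (p - 1) div 2"
  have p2: "p = 2*h + 1" using od unfolding h_def by presburger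
  define A where "A = (\<lambda>x. (int x)^2 mod int p) ` {0..h}"
  define B where "B = (\<lambda>x. (-1 - (int x)^2) mod int p) ` {0..h}"
  have lt: "\<And>x. x \<in> {0..h} \<Longrightarrow> 2*x < p" using p2 by auto
  have injA: "inj_on (\<lambda>x. (int x)^2 mod int p) {0..h}"
    by (rule inj_onI) (use sq_mod_inj[OF p] lt in blast)
  have injB: "inj_on (\<lambda>x. (-1 - (int x)^2) mod int p) {0..h}"
    by (rule inj_onI) (use neg_sq_mod_inj[OF p] lt in blast)
  have cA: "card A = h + 1" unfolding A_def using card_image[OF injA] by simp
  have cB: "card B = h + 1" unfolding B_def using card_image[OF injB] by simp
  have pp: "0 < int p" using p prime_gt_0_nat by auto
  have sub: "A \<union> B \<subseteq> {0..<int p}" unfolding A_def B_def using pp by auto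
  have "card (A \<union> B) \<le> p" using card_mono[OF _ sub] by simp
  moreover have "card A + card B = card (A \<union> B) + card (A \<inter> B)"
    by (rule card_Un_Int) (auto simp: A_def B_def)
  ultimately have "card (A \<inter> B) \<noteq> 0" using cA cB p2 by linarith
  then obtain z where "z \<in> A \<inter> B" by (metis card.empty ex_in_conv)
  then obtain x y where x: "x \<in> {0..h}" and y: "y \<in> {0..h}"
    and e: "(int x)^2 mod int p = (-1 - (int y)^2) mod int p"
    unfolding A_def B_def by auto
  have "int p dvd (int x)^2 - (-1 - (int y)^2)" using e by (simp add: mod_eq_dvd_iff)
  then have "int p dvd (int x)^2 + (int y)^2 + 1" by (simp add: algebra_simps)
  then show ?thesis using lt x y by blast
qed


lemma four_eq:
  fixes a b c d m :: int
  assumes "a \<le> m" "b \<le> m" "c \<le> m" "d \<le> m" "a + b + c + d = 4*m"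
  shows "a = m" "b = m" "c = m" "d = m"
  using assms by arith+

lemma four_zero:
  fixes a b c d :: int
  assumes "0 \<le> a" "0 \<le> b" "0 \<le> c" "0 \<le> d" "a + b + c + d = 0"
  shows "a = 0" "b = 0" "c = 0" "d = 0"
  using assms by arith+

lemma sq_eq_dvd: "(a::int)^2 = b^2 \<Longrightarrow> b dvd a"
proof -
  assume "a^2 = b^2"
  then have "a = b \<or> a = - b" by (simp add: power2_eq_iff)
  then show "b dvd a" by (elim disjE) simp_all
qed

lemma red_bound:
  fixes M u h :: int
  assumes "0 \<le> u" "u < M" "2*h \<le> M" "M \<le> 2*h+1"
  shows "(2*(u - h))^2 \<le> M^2"
proof -
  have "-M \<le> 2*(u-h)" using assms by arith
  moreover have "2*(u-h) \<le> M" using assms by arith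
  ultimately
  have "\<bar>2*(u-h)\<bar> \<le> \<bar>M\<bar>" by (simp add: abs_le_iff)
  then show ?thesis by (simp add: abs_le_square_iff)
qed

lemma descent_core:
  fixes M p x1 x2 x3 x4 t1 t2 t3 t4 y1 y2 y3 y4 :: int
  assumes M2: "2 \<le> M" and notdvd: "\<not> M dvd p"
    and xs: "M * p = x1^2 + x2^2 + x3^2 + x4^2"
    and Y1: "y1 = x1 - M*t1" and Y2: "y2 = x2 - M*t2" and Y3: "y3 = x3 - M*t3" and Y4: "y4 = x4 - M*t4"
    and bd: "(2*y1)^2 \<le> M^2" "(2*y2)^2 \<le> M^2" "(2*y3)^2 \<le> M^2" "(2*y4)^2 \<le> M^2"
  shows "\<exists>r. 0 < r \<and> r < M \<and> sq4 (r * p)"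
proof -
  have sqe: "\<And>u v. (u - M*v)^2 = u^2 - M*(2*u*v - M*v^2)"
    by (simp add: power2_eq_square algebra_simps)
  define r where "r = p - (2*x1*t1 - M*t1^2) - (2*x2*t2 - M*t2^2)
     - (2*x3*t3 - M*t3^2) - (2*x4*t4 - M*t4^2)"
  have ysum: "y1^2 + y2^2 + y3^2 + y4^2 = M * r"
  proof -
    have "y1^2 + y2^2 + y3^2 + y4^2 = (x1^2 + x2^2 + x3^2 + x4^2)
       - M*((2*x1*t1 - M*t1^2) + (2*x2*t2 - M*t2^2) + (2*x3*t3 - M*t3^2) + (2*x4*t4 - M*t4^2))"
      unfolding Y1 Y2 Y3 Y4 sqe by (simp add: algebra_simps)
    also have "\<dots> = M * r" unfolding r_def xs[symmetric] by (simp add: algebra_simps)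
    finally show ?thesis .
  qed
  have r0: "0 \<le> r"
  proof -
    have "0 \<le> y1^2 + y2^2 + y3^2 + y4^2" by simp
    then have "0 \<le> M * r" using ysum by simp
    then show ?thesis using M2 by (simp add: zero_le_mult_iff)
  qed
  have rM: "r \<le> M"
  proof -
    have "(2*y1)^2 + (2*y2)^2 + (2*y3)^2 + (2*y4)^2 = 4 * (M * r)"
      using ysum by (simp add: power_mult_distrib)
    then have "4 * (M * r) \<le> 4 * M^2" using bd by linarith
    then have "M * r \<le> M * M" by (simp add: power2_eq_square)
    then show ?thesis using M2 by simp
  qed
  show ?thesis
  proof (cases "r = 0")
    case True
    then have "y1^2 + y2^2 + y3^2 + y4^2 = 0" using ysum by simp
    then have "y1^2 = 0" "y2^2 = 0" "y3^2 = 0" "y4^2 = 0"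
      using four_zero[OF zero_le_power2[of y1] zero_le_power2[of y2] zero_le_power2[of y3] zero_le_power2[of y4]]
      by blast+
    then have yz: "y1 = 0" "y2 = 0" "y3 = 0" "y4 = 0" by simp_all
    have "M * p = (M*t1)^2 + (M*t2)^2 + (M*t3)^2 + (M*t4)^2"
      using xs Y1 Y2 Y3 Y4 yz by simp
    also have "\<dots> = M * (M * (t1^2 + t2^2 + t3^2 + t4^2))"
      by (simp add: power2_eq_square algebra_simps)
    finally have "p = M * (t1^2 + t2^2 + t3^2 + t4^2)" using M2 by simp
    then have "M dvd p" by simp
    then show ?thesis using notdvd by blast
  next
    case rn0: False
    show ?thesis
    proof (cases "r = M")
      case True
      have s4: "(2*y1)^2 + (2*y2)^2 + (2*y3)^2 + (2*y4)^2 = 4*M^2"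
        using ysum True by (simp add: power_mult_distrib power2_eq_square)
      then have eqs: "(2*y1)^2 = M^2" "(2*y2)^2 = M^2" "(2*y3)^2 = M^2" "(2*y4)^2 = M^2"
        using four_eq[OF bd] by blast+
      have dv: "M dvd 2*y1" "M dvd 2*y2" "M dvd 2*y3" "M dvd 2*y4"
        using sq_eq_dvd[OF eqs(1)] sq_eq_dvd[OF eqs(2)] sq_eq_dvd[OF eqs(3)] sq_eq_dvd[OF eqs(4)] by blast+
      obtain e1 where e1: "2 * y1 = M * e1" using dv(1) by (auto elim: dvdE)
      obtain e2 where e2: "2 * y2 = M * e2" using dv(2) by (auto elim: dvdE)
      obtain e3 where e3: "2 * y3 = M * e3" using dv(3) by (auto elim: dvdE)
      obtain e4 where e4: "2 * y4 = M * e4" using dv(4) by (auto elim: dvdE)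
      have ex: "\<And>v w. (v + M*w)^2 = v^2 + (2*v)*M*w + M^2*w^2"
        by (simp add: power2_eq_square algebra_simps)
      have X1: "x1 = y1 + M*t1" "x2 = y2 + M*t2" "x3 = y3 + M*t3" "x4 = y4 + M*t4"
        using Y1 Y2 Y3 Y4 by simp_all
      have "M * p = (y1^2+y2^2+y3^2+y4^2) + ((2*y1)*M*t1 + (2*y2)*M*t2 + (2*y3)*M*t3 + (2*y4)*M*t4)
          + M^2*(t1^2+t2^2+t3^2+t4^2)"
        unfolding xs X1 ex by (simp add: algebra_simps)
      also have "\<dots> = M^2 * (1 + e1*t1 + e2*t2 + e3*t3 + e4*t4 + (t1^2+t2^2+t3^2+t4^2))"
        unfolding ysum True e1 e2 e3 e4 by (simp add: power2_eq_square algebra_simps)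
      finally have "p = M * (1 + e1*t1 + e2*t2 + e3*t3 + e4*t4 + (t1^2+t2^2+t3^2+t4^2))"
        using M2 by (simp add: power2_eq_square)
      then have "M dvd p" by simp
      then show ?thesis using notdvd by blast
    next
      case False
      then have rlt: "0 < r" "r < M" using r0 rM rn0 by auto
      define w1 where "w1 = p - (x1*t1 + x2*t2 + x3*t3 + x4*t4)"
      define w2 where "w2 = x2*t1 - x1*t2 + x4*t3 - x3*t4"
      define w3 where "w3 = x3*t1 - x1*t3 + x2*t4 - x4*t2"
      define w4 where "w4 = x4*t1 - x1*t4 + x3*t2 - x2*t3"
      have z1a: "x1*y1+x2*y2+x3*y3+x4*y4 = (x1^2+x2^2+x3^2+x4^2) - M*(x1*t1 + x2*t2 + x3*t3 + x4*t4)"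
        unfolding Y1 Y2 Y3 Y4 by (simp add: power2_eq_square algebra_simps)
      have z1: "x1*y1+x2*y2+x3*y3+x4*y4 = M * w1"
        unfolding z1a xs[symmetric] w1_def by (simp add: right_diff_distrib)
      have z2: "x1*y2-x2*y1+x3*y4-x4*y3 = M * w2"
        unfolding Y1 Y2 Y3 Y4 w2_def by (simp add: algebra_simps)
      have z3: "x1*y3-x2*y4-x3*y1+x4*y2 = M * w3"
        unfolding Y1 Y2 Y3 Y4 w3_def by (simp add: algebra_simps)
      have z4: "x1*y4+x2*y3-x3*y2-x4*y1 = M * w4"
        unfolding Y1 Y2 Y3 Y4 w4_def by (simp add: algebra_simps)
      have "(M * p) * (M * r) = (x1^2+x2^2+x3^2+x4^2) * (y1^2+y2^2+y3^2+y4^2)"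
        by (simp only: xs ysum)
      also have "\<dots> = (M*w1)^2 + (M*w2)^2 + (M*w3)^2 + (M*w4)^2"
        by (simp only: euler4 z1 z2 z3 z4)
      finally have "M^2 * (p * r) = M^2 * (w1^2 + w2^2 + w3^2 + w4^2)"
        by (simp add: power_mult_distrib power2_eq_square algebra_simps)
      then have "r * p = w1^2 + w2^2 + w3^2 + w4^2" using M2 by (simp add: mult.commute)
      then have "sq4 (r * p)" unfolding sq4_def by blast
      then show ?thesis using rlt by blast
    qed
  qed
qed

lemma descent:
  fixes p :: nat
  assumes p: "prime p" and od: "odd p"
  shows "sq4 (int p)"
proof -
  have p1: "1 < p" using p prime_gt_1_nat by blast
  obtain x y :: nat where hx: "2*x < p" and hy: "2*y < p" and dv: "int p dvd (int x)^2 + (int y)^2 + 1"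
    using pigeon[OF p od] by blast
  obtain t where t: "(int x)^2 + (int y)^2 + 1 = int p * t" using dv by (auto elim: dvdE)
  have tpos: "0 < t"
  proof -
    have "0 < (int x)^2 + (int y)^2 + 1" by (simp add: add_pos_nonneg)
    then show ?thesis using t by (simp add: zero_less_mult_iff)
  qed
  have tlt: "t < int p"
  proof -
    have "(2*int x)^2 < (int p)^2" using hx by (intro power_strict_mono) auto
    moreover have "(2*int y)^2 < (int p)^2" using hy by (intro power_strict_mono) auto
    moreover have "4 \<le> (int p)^2"
    proof -
      have "2 \<le> int p" using p1 by simp
      then have "2*2 \<le> int p * int p" by (intro mult_mono) auto
      then show ?thesis by (simp add: power2_eq_square)
    qed
    ultimately have "4*((int x)^2 + (int y)^2 + 1) < 4 * (int p)^2"
      by (simp add: power_mult_distrib)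
    then have "int p * t < int p * int p" using t by (simp add: power2_eq_square)
    then show ?thesis using p1 by simp
  qed
  define S where "S = {m::nat. 0 < m \<and> sq4 (int m * int p)}"
  have tS: "nat t \<in> S"
  proof -
    have "int (nat t) * int p = (int x)^2 + (int y)^2 + 1^2 + 0^2" using t tpos by (simp add: mult.commute)
    then have "sq4 (int (nat t) * int p)" by (rule sq4I)
    then show ?thesis unfolding S_def using tpos by simp
  qed
  define m where "m = (LEAST m. m \<in> S)"
  have mS: "m \<in> S" unfolding m_def using tS by (rule LeastI)
  have mle: "m \<le> nat t" unfolding m_def using tS by (rule Least_le)
  have mmin: "\<And>r. r \<in> S \<Longrightarrow> m \<le> r" unfolding m_def by (rule Least_le)
  have m0: "0 < m" using mS S_def by auto
  have mp: "m < p"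
  proof -
    have "int m \<le> int (nat t)" using mle by (simp only: of_nat_le_iff)
    moreover have "int (nat t) = t" using tpos by simp
    ultimately show ?thesis using tlt by linarith
  qed
  show ?thesis
  proof (cases "m = 1")
    case True then show ?thesis using mS S_def by simp
  next
    case False
    then have m2: "2 \<le> m" using m0 by linarith
    define M where "M = int m"
    have M2: "2 \<le> M" using m2 M_def by simp
    have notdvd: "\<not> M dvd int p"
    proof
      assume "M dvd int p"
      then have "m dvd p" using M_def by simp
      then have "m = 1 \<or> m = p" using p by (simp add: prime_nat_iff)
      then show False using m2 mp by auto
    qed
    obtain x1 x2 x3 x4 where xs: "M * int p = x1^2 + x2^2 + x3^2 + x4^2"
      using mS unfolding S_def sq4_def M_def by auto
    define hf where "hf = M div 2"
    define tt where "tt = (\<lambda>x. (x + hf) div M)"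
    have yx: "\<And>x. (x + hf) mod M - hf = x - M * tt x"
    proof -
      fix x
      have e: "M * tt x + (x + hf) mod M = x + hf" unfolding tt_def by (rule mult_div_mod_eq)
      show "(x + hf) mod M - hf = x - M * tt x" using e by linarith
    qed
    have h1: "2*hf \<le> M" "M \<le> 2*hf + 1" unfolding hf_def by presburger+
    have ybd: "\<And>x. (2 * (x - M * tt x))^2 \<le> M^2"
    proof -
      fix x
      have a: "0 \<le> (x + hf) mod M" "(x + hf) mod M < M" using M2 by auto
      show "(2 * (x - M * tt x))^2 \<le> M^2"
        using red_bound[OF a h1] yx[of x] by simp
    qed
    obtain r where r: "0 < r" "r < M" "sq4 (r * int p)"
      using descent_core[OF M2 notdvd xs refl refl refl refl ybd ybd ybd ybd] by blast
    then have "nat r \<in> S" unfolding S_def by simp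
    then have "m \<le> nat r" by (rule mmin)
    then show ?thesis using r M_def by linarith
  qed
qed

lemma sq4_nat: "sq4 (int n)"
proof (induction n rule: less_induct)
  case (less n)
  show ?case
  proof (cases "n \<le> 1")
    case True
    then have "n = 0 \<or> n = 1" by auto
    then have "int n = (int n)^2 + 0^2 + 0^2 + 0^2" by auto
    then show ?thesis by (rule sq4I)
  next
    case False
    show ?thesis
    proof (cases "prime n")
      case True
      show ?thesis
      proof (cases "n = 2")
        case True
        then have "int n = 1^2 + 1^2 + 0^2 + 0^2" by simp
        then show ?thesis by (rule sq4I)
      next
        case False
        have "2 \<le> n" using \<open>prime n\<close> by (rule prime_ge_2_nat)
        then have "2 < n" using False by linarith
        then have "odd n" using \<open>prime n\<close> prime_odd_nat by blast
        then show ?thesis using descent \<open>prime n\<close> by blast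
      qed
    next
      case np: False
      then obtain a where a: "a dvd n" "a \<noteq> 1" "a \<noteq> n" using False prime_nat_iff by auto
      then obtain b where b: "n = a * b" by (auto elim: dvdE)
      have "0 < n" using False by simp
      have a0: "a \<noteq> 0" "b \<noteq> 0" using b \<open>0 < n\<close> by auto
      have "a \<le> n" using a(1) \<open>0 < n\<close> by (rule dvd_imp_le)
      then have an: "a < n" using a(3) by simp
      have "b \<noteq> 1" using a(3) b by simp
      then have "b \<ge> 2" using a0 by linarith
      have "a \<ge> 2" using a0 a(2) by linarith
      have bn: "b < n" using b \<open>a \<ge> 2\<close> a0 by simp
      have "sq4 (int a)" "sq4 (int b)" using less an bn by blast+
      then show ?thesis using sq4_mult b by (metis of_nat_mult)
    qed
  qed
qed

theorem four_squares: "\<exists>a b c d :: nat. n = a^2 + b^2 + c^2 + d^2"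
proof -
  obtain a b c d where e: "int n = a^2 + b^2 + c^2 + d^2" using sq4_nat[of n] unfolding sq4_def by blast
  have "int n = int ((nat \<bar>a\<bar>)^2 + (nat \<bar>b\<bar>)^2 + (nat \<bar>c\<bar>)^2 + (nat \<bar>d\<bar>)^2)"
    using e by simp
  then show ?thesis by (metis of_nat_eq_iff)
qed


definition Wl :: "int list list" where "Wl = [[0,1,1,0,-1,1,-1,0,0,0,-1,1,-1,0,1,1,0,1,0,1,1,1,1,-1,0,-1,-1,1,-1,-1,-1,1],
  [-1,0,1,1,0,-1,1,-1,0,0,0,-1,1,-1,0,1,-1,0,1,0,1,1,1,1,-1,0,-1,-1,1,-1,-1,-1],
  [-1,-1,0,1,1,0,-1,1,-1,0,0,0,-1,1,-1,0,1,-1,0,1,0,1,1,1,1,-1,0,-1,-1,1,-1,-1],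
  [0,-1,-1,0,1,1,0,-1,1,-1,0,0,0,-1,1,-1,1,1,-1,0,1,0,1,1,1,1,-1,0,-1,-1,1,-1],
  [1,0,-1,-1,0,1,1,0,-1,1,-1,0,0,0,-1,1,1,1,1,-1,0,1,0,1,1,1,1,-1,0,-1,-1,1],
  [-1,1,0,-1,-1,0,1,1,0,-1,1,-1,0,0,0,-1,-1,1,1,1,-1,0,1,0,1,1,1,1,-1,0,-1,-1],
  [1,-1,1,0,-1,-1,0,1,1,0,-1,1,-1,0,0,0,1,-1,1,1,1,-1,0,1,0,1,1,1,1,-1,0,-1],
  [0,1,-1,1,0,-1,-1,0,1,1,0,-1,1,-1,0,0,1,1,-1,1,1,1,-1,0,1,0,1,1,1,1,-1,0],
  [0,0,1,-1,1,0,-1,-1,0,1,1,0,-1,1,-1,0,0,1,1,-1,1,1,1,-1,0,1,0,1,1,1,1,-1],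
  [0,0,0,1,-1,1,0,-1,-1,0,1,1,0,-1,1,-1,1,0,1,1,-1,1,1,1,-1,0,1,0,1,1,1,1],
  [1,0,0,0,1,-1,1,0,-1,-1,0,1,1,0,-1,1,-1,1,0,1,1,-1,1,1,1,-1,0,1,0,1,1,1],
  [-1,1,0,0,0,1,-1,1,0,-1,-1,0,1,1,0,-1,-1,-1,1,0,1,1,-1,1,1,1,-1,0,1,0,1,1],
  [1,-1,1,0,0,0,1,-1,1,0,-1,-1,0,1,1,0,-1,-1,-1,1,0,1,1,-1,1,1,1,-1,0,1,0,1],
  [0,1,-1,1,0,0,0,1,-1,1,0,-1,-1,0,1,1,-1,-1,-1,-1,1,0,1,1,-1,1,1,1,-1,0,1,0],
  [-1,0,1,-1,1,0,0,0,1,-1,1,0,-1,-1,0,1,0,-1,-1,-1,-1,1,0,1,1,-1,1,1,1,-1,0,1],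
  [-1,-1,0,1,-1,1,0,0,0,1,-1,1,0,-1,-1,0,-1,0,-1,-1,-1,-1,1,0,1,1,-1,1,1,1,-1,0],
  [0,1,-1,-1,-1,1,-1,-1,0,-1,1,1,1,1,0,1,0,-1,-1,0,1,-1,1,0,0,0,1,-1,1,0,-1,-1],
  [-1,0,1,-1,-1,-1,1,-1,-1,0,-1,1,1,1,1,0,1,0,-1,-1,0,1,-1,1,0,0,0,1,-1,1,0,-1],
  [0,-1,0,1,-1,-1,-1,1,-1,-1,0,-1,1,1,1,1,1,1,0,-1,-1,0,1,-1,1,0,0,0,1,-1,1,0],
  [-1,0,-1,0,1,-1,-1,-1,1,-1,-1,0,-1,1,1,1,0,1,1,0,-1,-1,0,1,-1,1,0,0,0,1,-1,1],
  [-1,-1,0,-1,0,1,-1,-1,-1,1,-1,-1,0,-1,1,1,-1,0,1,1,0,-1,-1,0,1,-1,1,0,0,0,1,-1],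
  [-1,-1,-1,0,-1,0,1,-1,-1,-1,1,-1,-1,0,-1,1,1,-1,0,1,1,0,-1,-1,0,1,-1,1,0,0,0,1],
  [-1,-1,-1,-1,0,-1,0,1,-1,-1,-1,1,-1,-1,0,-1,-1,1,-1,0,1,1,0,-1,-1,0,1,-1,1,0,0,0],
  [1,-1,-1,-1,-1,0,-1,0,1,-1,-1,-1,1,-1,-1,0,0,-1,1,-1,0,1,1,0,-1,-1,0,1,-1,1,0,0],
  [0,1,-1,-1,-1,-1,0,-1,0,1,-1,-1,-1,1,-1,-1,0,0,-1,1,-1,0,1,1,0,-1,-1,0,1,-1,1,0],
  [1,0,1,-1,-1,-1,-1,0,-1,0,1,-1,-1,-1,1,-1,0,0,0,-1,1,-1,0,1,1,0,-1,-1,0,1,-1,1],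
  [1,1,0,1,-1,-1,-1,-1,0,-1,0,1,-1,-1,-1,1,-1,0,0,0,-1,1,-1,0,1,1,0,-1,-1,0,1,-1],
  [-1,1,1,0,1,-1,-1,-1,-1,0,-1,0,1,-1,-1,-1,1,-1,0,0,0,-1,1,-1,0,1,1,0,-1,-1,0,1],
  [1,-1,1,1,0,1,-1,-1,-1,-1,0,-1,0,1,-1,-1,-1,1,-1,0,0,0,-1,1,-1,0,1,1,0,-1,-1,0],
  [1,1,-1,1,1,0,1,-1,-1,-1,-1,0,-1,0,1,-1,0,-1,1,-1,0,0,0,-1,1,-1,0,1,1,0,-1,-1],
  [1,1,1,-1,1,1,0,1,-1,-1,-1,-1,0,-1,0,1,1,0,-1,1,-1,0,0,0,-1,1,-1,0,1,1,0,-1],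
  [-1,1,1,1,-1,1,1,0,1,-1,-1,-1,-1,0,-1,0,1,1,0,-1,1,-1,0,0,0,-1,1,-1,0,1,1,0]]"
definition pG :: "nat list" where "pG = [8,9,10,11,12,13,14,15,0,1,2,3,4,5,6,7,24,25,26,27,28,29,30,31,16,17,18,19,20,21,22,23]"
definition sG :: "int list" where "sG = [1,1,1,1,1,1,1,1,-1,-1,-1,-1,-1,-1,-1,-1,1,1,1,1,1,1,1,1,-1,-1,-1,-1,-1,-1,-1,-1]"
definition pJ :: "nat list" where "pJ = [16,31,30,29,28,27,26,25,24,23,22,21,20,19,18,17,0,15,14,13,12,11,10,9,8,7,6,5,4,3,2,1]"
definition sJ :: "int list" where "sJ = [-1,1,1,1,1,1,1,1,1,1,1,1,1,1,1,1,1,-1,-1,-1,-1,-1,-1,-1,-1,-1,-1,-1,-1,-1,-1,-1]"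
definition pK :: "nat list" where "pK = [24,23,22,21,20,19,18,17,16,31,30,29,28,27,26,25,8,7,6,5,4,3,2,1,0,15,14,13,12,11,10,9]"
definition sK :: "int list" where "sK = [1,1,1,1,1,1,1,1,1,-1,-1,-1,-1,-1,-1,-1,-1,-1,-1,-1,-1,-1,-1,-1,-1,1,1,1,1,1,1,1]"
definition pm :: "nat list \<Rightarrow> int list \<Rightarrow> nat \<Rightarrow> nat \<Rightarrow> int" where
  "pm P S i j = (if j = P ! i then S ! i else 0)"
definition all32 :: "(nat \<Rightarrow> nat \<Rightarrow> bool) \<Rightarrow> bool" where
  "all32 f = list_all (\<lambda>i. list_all (\<lambda>j. f i j) [0..<32]) [0..<32]"
definition dl :: "nat \<Rightarrow> nat \<Rightarrow> int" where "dl i j = (if i = j then 1 else 0)"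
definition g :: "(nat \<Rightarrow> nat \<Rightarrow> int) \<Rightarrow> (nat \<Rightarrow> nat \<Rightarrow> int) \<Rightarrow> nat \<Rightarrow> nat \<Rightarrow> int" where
  "g U V i j = (\<Sum>l<32. U i l * V j l)"
definition gram :: "int list list \<Rightarrow> int list list" where
 "gram M = map (\<lambda>r1. map (\<lambda>r2. sum_list (map2 (*) r1 r2)) M) M"

lemma all32D: "all32 f \<Longrightarrow> i < 32 \<Longrightarrow> j < 32 \<Longrightarrow> f i j"
  unfolding all32_def list_all_iff by auto

lemma sum_list_map2: "length xs = n \<Longrightarrow> length ys = n \<Longrightarrow>
  sum_list (map2 (*) xs ys) = (\<Sum>l<n. xs ! l * ys ! l)"
proof (induction xs arbitrary: ys n)
  case Nil then show ?case by simp
next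
  case (Cons x xs)
  then obtain y ys' n' where "ys = y # ys'" "n = Suc n'" by (cases ys; cases n; auto)
  then show ?case using Cons by (simp del: sum.lessThan_Suc add: sum.lessThan_Suc_shift)
qed

lemma Wl_len: "length Wl = 32" "list_all (\<lambda>r. length r = 32) Wl"
  by (simp_all add: Wl_def)

lemma gramW_check: "gram Wl = map (\<lambda>i. map (\<lambda>j. if i = j then 23 else 0) [0..<32]) [0..<32]"
  by code_simp
lemma Wconv_check: "all32 (\<lambda>i j. W32_23 i j = Wl ! i ! j)" unfolding all32_def by code_simp
lemma Wskew_check: "all32 (\<lambda>i j. Wl ! j ! i = - Wl ! i ! j)" unfolding all32_def by code_simp

lemma Wconv: "i < 32 \<Longrightarrow> j < 32 \<Longrightarrow> W32_23 i j = Wl ! i ! j"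
  using all32D[OF Wconv_check] by blast

lemma W_skew: "i < 32 \<Longrightarrow> j < 32 \<Longrightarrow> W32_23 j i = - W32_23 i j"
  using all32D[OF Wskew_check, of i j] Wconv[of i j] Wconv[of j i] by simp

lemma gWW: assumes "i < 32" "j < 32" shows "g W32_23 W32_23 i j = 23 * dl i j"
proof -
  have li: "length (Wl ! i) = 32" "length (Wl ! j) = 32"
    using Wl_len assms by (auto simp: list_all_length)
  have "gram Wl ! i ! j = (if i = j then 23 else 0)"
    using assms gramW_check by simp
  moreover have "gram Wl ! i ! j = (\<Sum>l<32. Wl ! i ! l * Wl ! j ! l)"
    unfolding gram_def using assms Wl_len li by (simp add: sum_list_map2)
  ultimately show ?thesis unfolding g_def dl_def using assms by (simp add: Wconv)
qed


lemma g_pm_left: assumes "P ! i < 32" shows "g (pm P S) U i j = S ! i * U j (P ! i)"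
proof -
  have "g (pm P S) U i j = (\<Sum>l<32. if l = P ! i then S ! i * U j l else 0)"
    unfolding g_def pm_def by (rule sum.cong) auto
  also have "\<dots> = S ! i * U j (P ! i)" using assms by simp
  finally show ?thesis .
qed

lemma g_pm_right: assumes "P ! j < 32" shows "g U (pm P S) i j = U i (P ! j) * S ! j"
proof -
  have "g U (pm P S) i j = (\<Sum>l<32. if l = P ! j then U i l * S ! j else 0)"
    unfolding g_def pm_def by (rule sum.cong) auto
  also have "\<dots> = U i (P ! j) * S ! j" using assms by simp
  finally show ?thesis .
qed

lemma g_dl_left: assumes "i < 32" shows "g dl U i j = U j i"
proof -
  have "g dl U i j = (\<Sum>l<32. if l = i then U j l else 0)"
    unfolding g_def dl_def by (rule sum.cong) auto
  then show ?thesis using assms by simp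
qed

lemma g_dl_right: assumes "j < 32" shows "g U dl i j = U i j"
proof -
  have "g U dl i j = (\<Sum>l<32. if l = j then U i l else 0)"
    unfolding g_def dl_def by (rule sum.cong) auto
  then show ?thesis using assms by simp
qed

lemma perm_facts:
  assumes bd: "list_all (\<lambda>v. v < 32) P" "length P = 32"
    and sk: "all32 (\<lambda>i j. pm P S j i = - pm P S i j)"
    and sf: "all32 (\<lambda>i j. S ! i * pm P S j (P ! i) = dl i j)"
    and wc: "all32 (\<lambda>i j. S ! i * Wl ! j ! (P ! i) = Wl ! i ! (P ! j) * S ! j)"
    and ij: "i < 32" "j < 32"
  shows "pm P S j i = - pm P S i j" "g (pm P S) (pm P S) i j = dl i j"
    "g (pm P S) W32_23 i j = g W32_23 (pm P S) i j"
proof -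
  have b: "\<And>i. i < 32 \<Longrightarrow> P ! i < 32" using bd by (auto simp: list_all_length)
  show "pm P S j i = - pm P S i j" using all32D[OF sk ij] .
  show "g (pm P S) (pm P S) i j = dl i j" using all32D[OF sf ij] g_pm_left b ij by simp
  show "g (pm P S) W32_23 i j = g W32_23 (pm P S) i j"
    using all32D[OF wc ij] g_pm_left g_pm_right b ij Wconv by simp
qed

lemma anti_facts:
  assumes bd: "list_all (\<lambda>v. v < 32) P" "length P = 32" "list_all (\<lambda>v. v < 32) Q" "length Q = 32"
    and an: "all32 (\<lambda>i j. S ! i * pm Q T j (P ! i) + T ! i * pm P S j (Q ! i) = 0)"
    and ij: "i < 32" "j < 32"
  shows "g (pm Q T) (pm P S) i j = - g (pm P S) (pm Q T) i j"
proof -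
  have b: "\<And>i. i < 32 \<Longrightarrow> P ! i < 32" "\<And>i. i < 32 \<Longrightarrow> Q ! i < 32"
    using bd by (auto simp: list_all_length)
  show ?thesis using all32D[OF an ij] g_pm_left b ij by simp
qed

lemma bdG: "list_all (\<lambda>v. v < 32) pG" "length pG = 32" by (simp_all add: pG_def)
lemma bdJ: "list_all (\<lambda>v. v < 32) pJ" "length pJ = 32" by (simp_all add: pJ_def)
lemma bdK: "list_all (\<lambda>v. v < 32) pK" "length pK = 32" by (simp_all add: pK_def)

lemma skG: "all32 (\<lambda>i j. pm pG sG j i = - pm pG sG i j)" unfolding all32_def by code_simp
lemma skJ: "all32 (\<lambda>i j. pm pJ sJ j i = - pm pJ sJ i j)" unfolding all32_def by code_simp
lemma skK: "all32 (\<lambda>i j. pm pK sK j i = - pm pK sK i j)" unfolding all32_def by code_simp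
lemma sfG: "all32 (\<lambda>i j. sG ! i * pm pG sG j (pG ! i) = dl i j)" unfolding all32_def dl_def by code_simp
lemma sfJ: "all32 (\<lambda>i j. sJ ! i * pm pJ sJ j (pJ ! i) = dl i j)" unfolding all32_def dl_def by code_simp
lemma sfK: "all32 (\<lambda>i j. sK ! i * pm pK sK j (pK ! i) = dl i j)" unfolding all32_def dl_def by code_simp
lemma wcG: "all32 (\<lambda>i j. sG ! i * Wl ! j ! (pG ! i) = Wl ! i ! (pG ! j) * sG ! j)" unfolding all32_def by code_simp
lemma wcJ: "all32 (\<lambda>i j. sJ ! i * Wl ! j ! (pJ ! i) = Wl ! i ! (pJ ! j) * sJ ! j)" unfolding all32_def by code_simp
lemma wcK: "all32 (\<lambda>i j. sK ! i * Wl ! j ! (pK ! i) = Wl ! i ! (pK ! j) * sK ! j)" unfolding all32_def by code_simp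
lemma anGJ: "all32 (\<lambda>i j. sG ! i * pm pJ sJ j (pG ! i) + sJ ! i * pm pG sG j (pJ ! i) = 0)" unfolding all32_def by code_simp
lemma anGK: "all32 (\<lambda>i j. sG ! i * pm pK sK j (pG ! i) + sK ! i * pm pG sG j (pK ! i) = 0)" unfolding all32_def by code_simp
lemma anJK: "all32 (\<lambda>i j. sJ ! i * pm pK sK j (pJ ! i) + sK ! i * pm pJ sJ j (pK ! i) = 0)" unfolding all32_def by code_simp

abbreviation "Gm \<equiv> pm pG sG"
abbreviation "Jm \<equiv> pm pJ sJ"
abbreviation "Km \<equiv> pm pK sK"

lemmas factsG = perm_facts[OF bdG skG sfG wcG]
lemmas factsJ = perm_facts[OF bdJ skJ sfJ wcJ]
lemmas factsK = perm_facts[OF bdK skK sfK wcK]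
lemmas aGJ = anti_facts[OF bdG bdJ anGJ]
lemmas aGK = anti_facts[OF bdG bdK anGK]
lemmas aJK = anti_facts[OF bdJ bdK anJK]


definition addm :: "(nat \<Rightarrow> nat \<Rightarrow> int) \<Rightarrow> (nat \<Rightarrow> nat \<Rightarrow> int) \<Rightarrow> nat \<Rightarrow> nat \<Rightarrow> int" where
  "addm A B = (\<lambda>i j. A i j + B i j)"
definition smul :: "int \<Rightarrow> (nat \<Rightarrow> nat \<Rightarrow> int) \<Rightarrow> nat \<Rightarrow> nat \<Rightarrow> int" where
  "smul c A = (\<lambda>i j. c * A i j)"

lemma addm_app [simp]: "addm A B i j = A i j + B i j" by (simp add: addm_def)
lemma smul_app [simp]: "smul c A i j = c * A i j" by (simp add: smul_def)

lemma g_add_l: "g (addm A B) C i j = g A C i j + g B C i j"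
  unfolding g_def by (simp add: distrib_right sum.distrib)
lemma g_add_r: "g C (addm A B) i j = g C A i j + g C B i j"
  unfolding g_def by (simp add: distrib_left sum.distrib)
lemma g_smul_l: "g (smul c A) C i j = c * g A C i j"
  unfolding g_def by (simp add: sum_distrib_left mult.assoc)
lemma g_smul_r: "g C (smul c A) i j = c * g C A i j"
  unfolding g_def by (simp add: sum_distrib_left algebra_simps)

lemma dl_sym: "dl j i = dl i j" by (simp add: dl_def)

definition Y2 :: "int \<Rightarrow> int \<Rightarrow> int \<Rightarrow> nat \<Rightarrow> nat \<Rightarrow> int" where
  "Y2 c d e = addm (smul c Gm) (addm (smul d Jm) (smul e Km))"
definition TL :: "int \<Rightarrow> int \<Rightarrow> int \<Rightarrow> int \<Rightarrow> nat \<Rightarrow> nat \<Rightarrow> int" where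
  "TL x c d e = addm (smul x dl) (smul 3 (Y2 c d e))"
definition TR :: "int \<Rightarrow> int \<Rightarrow> nat \<Rightarrow> nat \<Rightarrow> int" where
  "TR y a = addm (smul y W32_23) (smul (3*a) dl)"
definition BL :: "int \<Rightarrow> int \<Rightarrow> nat \<Rightarrow> nat \<Rightarrow> int" where
  "BL y a = addm (smul y W32_23) (smul (-(3*a)) dl)"
definition BR :: "int \<Rightarrow> int \<Rightarrow> int \<Rightarrow> int \<Rightarrow> nat \<Rightarrow> nat \<Rightarrow> int" where
  "BR x c d e = addm (smul x dl) (smul (-3) (Y2 c d e))"

lemmas gsimps = g_add_l g_add_r g_smul_l g_smul_r

context
  fixes i j :: nat
  assumes ij: "i < 32" "j < 32"
begin

lemma local_facts:
  "g dl U i j = U j i" "g U dl i j = U i j"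
  "Gm j i = - Gm i j" "Jm j i = - Jm i j" "Km j i = - Km i j"
  "g Gm Gm i j = dl i j" "g Jm Jm i j = dl i j" "g Km Km i j = dl i j"
  "g Gm W32_23 i j = g W32_23 Gm i j" "g Jm W32_23 i j = g W32_23 Jm i j" "g Km W32_23 i j = g W32_23 Km i j"
  "g Jm Gm i j = - g Gm Jm i j" "g Km Gm i j = - g Gm Km i j" "g Km Jm i j = - g Jm Km i j"
  "g W32_23 W32_23 i j = 23 * dl i j" "W32_23 j i = - W32_23 i j"
  using g_dl_left[OF ij(1)] g_dl_right[OF ij(2)] factsG[OF ij] factsJ[OF ij] factsK[OF ij]
    aGJ[OF ij] aGK[OF ij] aJK[OF ij] gWW[OF ij] W_skew[OF ij] by auto

lemma b1: "g (TL x c d e) (TL x c d e) i j + g (TR y a) (TR y a) i j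
   = (x^2 + 23*y^2 + 9*(a^2+c^2+d^2+e^2)) * dl i j"
  unfolding TL_def TR_def Y2_def
  by (simp only: gsimps local_facts addm_app smul_app dl_sym) (simp add: algebra_simps power2_eq_square)

lemma b2: "g (TL x c d e) (BL y a) i j + g (TR y a) (BR x c d e) i j = 0"
  unfolding TL_def TR_def BL_def BR_def Y2_def
  by (simp only: gsimps local_facts addm_app smul_app dl_sym) (simp add: algebra_simps)

lemma b3: "g (BL y a) (TL x c d e) i j + g (BR x c d e) (TR y a) i j = 0"
  unfolding TL_def TR_def BL_def BR_def Y2_def
  by (simp only: gsimps local_facts addm_app smul_app dl_sym) (simp add: algebra_simps)

lemma b4: "g (BL y a) (BL y a) i j + g (BR x c d e) (BR x c d e) i j
   = (x^2 + 23*y^2 + 9*(a^2+c^2+d^2+e^2)) * dl i j"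
  unfolding BL_def BR_def Y2_def
  by (simp only: gsimps local_facts addm_app smul_app dl_sym) (simp add: algebra_simps power2_eq_square)

end


definition Xf :: "int \<Rightarrow> int \<Rightarrow> int \<Rightarrow> int \<Rightarrow> int \<Rightarrow> int \<Rightarrow> nat \<Rightarrow> nat \<Rightarrow> int" where
  "Xf x y a c d e i j = (if i < 32 then (if j < 32 then TL x c d e i j else TR y a i (j - 32))
     else (if j < 32 then BL y a (i - 32) j else BR x c d e (i - 32) (j - 32)))"

lemma sum64: "(\<Sum>l<64. f l) = (\<Sum>l<32. f l) + (\<Sum>l<32. f (l + 32))" for f :: "nat \<Rightarrow> int"
proof -
  have "{..<64::nat} = {..<32} \<union> {32..<64}" by auto
  then have "(\<Sum>l<64. f l) = (\<Sum>l\<in>{..<32} \<union> {32..<64}. f l)" by simp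
  also have "\<dots> = (\<Sum>l<32. f l) + (\<Sum>l\<in>{32..<64}. f l)"
    by (rule sum.union_disjoint) auto
  finally have "(\<Sum>l<64. f l) = (\<Sum>l<32. f l) + (\<Sum>l\<in>{32..<64}. f l)" .
  also have "(\<Sum>l\<in>{32..<64}. f l) = (\<Sum>l<32. f (l + 32))"
    using sum.shift_bounds_nat_ivl[of f 0 32 32] by (simp add: lessThan_atLeast0)
  finally show ?thesis .
qed

lemma Xgram:
  assumes "i < 64" "j < 64"
  shows "(\<Sum>l<64. Xf x y a c d e i l * Xf x y a c d e j l)
     = (x^2 + 23*y^2 + 9*(a^2+c^2+d^2+e^2)) * (if i = j then 1 else 0)"
proof -
  let ?N = "x^2 + 23*y^2 + 9*(a^2+c^2+d^2+e^2)"
  let ?X = "Xf x y a c d e"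
  have split: "(\<Sum>l<64. ?X i l * ?X j l) = (\<Sum>l<32. ?X i l * ?X j l) + (\<Sum>l<32. ?X i (l+32) * ?X j (l+32))"
    by (rule sum64)
  show ?thesis
  proof (cases "i < 32")
    case i: True
    show ?thesis
    proof (cases "j < 32")
      case j: True
      have "(\<Sum>l<32. ?X i l * ?X j l) = g (TL x c d e) (TL x c d e) i j"
        unfolding g_def Xf_def using i j by (intro sum.cong) auto
      moreover have "(\<Sum>l<32. ?X i (l+32) * ?X j (l+32)) = g (TR y a) (TR y a) i j"
        unfolding g_def Xf_def using i j by (intro sum.cong) auto
      ultimately show ?thesis using split b1[OF i j] by (simp add: dl_def)
    next
      case j: False
      have j': "j - 32 < 32" using assms j by simp
      have "(\<Sum>l<32. ?X i l * ?X j l) = g (TL x c d e) (BL y a) i (j - 32)"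
        unfolding g_def Xf_def using i j by (intro sum.cong) auto
      moreover have "(\<Sum>l<32. ?X i (l+32) * ?X j (l+32)) = g (TR y a) (BR x c d e) i (j - 32)"
        unfolding g_def Xf_def using i j by (intro sum.cong) auto
      ultimately show ?thesis using split b2[OF i j'] i j by simp
    qed
  next
    case i: False
    have i': "i - 32 < 32" using assms i by simp
    show ?thesis
    proof (cases "j < 32")
      case j: True
      have "(\<Sum>l<32. ?X i l * ?X j l) = g (BL y a) (TL x c d e) (i - 32) j"
        unfolding g_def Xf_def using i j by (intro sum.cong) auto
      moreover have "(\<Sum>l<32. ?X i (l+32) * ?X j (l+32)) = g (BR x c d e) (TR y a) (i - 32) j"
        unfolding g_def Xf_def using i j by (intro sum.cong) auto
      ultimately show ?thesis using split b3[OF i' j] i j by simp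
    next
      case j: False
      have j': "j - 32 < 32" using assms j by simp
      have "(\<Sum>l<32. ?X i l * ?X j l) = g (BL y a) (BL y a) (i - 32) (j - 32)"
        unfolding g_def Xf_def using i j by (intro sum.cong) auto
      moreover have "(\<Sum>l<32. ?X i (l+32) * ?X j (l+32)) = g (BR x c d e) (BR x c d e) (i - 32) (j - 32)"
        unfolding g_def Xf_def using i j by (intro sum.cong) auto
      moreover have "(i - 32 = j - 32) = (i = j)" using i j by auto
      ultimately show ?thesis using split b4[OF i' j'] by (simp add: dl_def)
    qed
  qed
qed

lemma mod3_eq: "(a::int) = b + 3 * t \<Longrightarrow> a mod 3 = b mod 3" by simp

lemma code_mem:
  assumes y: "y = x + 3 * q" and i: "i < 64"
  shows "(\<lambda>j. if j < 64 then Xf x y a c d e i j mod 3 else 0) \<in> C3_W"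
proof (cases "i < 32")
  case True
  define u where "u = (\<lambda>l::nat. x * dl i l)"
  have s: "\<And>j. (\<Sum>l<32. u l * genIW l j) = x * genIW i j"
  proof -
    fix j
    have "(\<Sum>l<32. u l * genIW l j) = (\<Sum>l<32. if l = i then x * genIW l j else 0)"
      unfolding u_def dl_def by (intro sum.cong) auto
    then show "(\<Sum>l<32. u l * genIW l j) = x * genIW i j" using True by simp
  qed
  have "\<forall>j<64. Xf x y a c d e i j mod 3 = (\<Sum>l<32. u l * genIW l j) mod 3"
  proof (intro allI impI)
    fix j :: nat assume j: "j < 64"
    show "Xf x y a c d e i j mod 3 = (\<Sum>l<32. u l * genIW l j) mod 3"
    proof (cases "j < 32")
      case jt: True
      have "Xf x y a c d e i j = x * genIW i j + 3 * Y2 c d e i j"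
        using True jt unfolding Xf_def TL_def genIW_def dl_def by auto
      then show ?thesis unfolding s by (rule mod3_eq)
    next
      case jf: False
      have "Xf x y a c d e i j = x * genIW i j + 3 * (q * W32_23 i (j - 32) + a * dl i (j - 32))"
        using True jf unfolding Xf_def TR_def genIW_def y by (simp add: algebra_simps)
      then show ?thesis unfolding s by (rule mod3_eq)
    qed
  qed
  then show ?thesis unfolding C3_W_def code_gen_def by auto
next
  case False
  define i' where "i' = i - 32"
  have i': "i' < 32" using i False i'_def by simp
  define u where "u = (\<lambda>l::nat. x * W32_23 i' l)"
  have "\<forall>j<64. Xf x y a c d e i j mod 3 = (\<Sum>l<32. u l * genIW l j) mod 3"
  proof (intro allI impI)
    fix j :: nat assume j: "j < 64"
    show "Xf x y a c d e i j mod 3 = (\<Sum>l<32. u l * genIW l j) mod 3"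
    proof (cases "j < 32")
      case jt: True
      have "(\<Sum>l<32. u l * genIW l j) = (\<Sum>l<32. if l = j then x * W32_23 i' j else 0)"
        unfolding u_def genIW_def using jt by (intro sum.cong) auto
      then have s: "(\<Sum>l<32. u l * genIW l j) = x * W32_23 i' j" using jt by simp
      have "Xf x y a c d e i j = x * W32_23 i' j + 3 * (q * W32_23 i' j - a * dl i' j)"
        using False jt unfolding Xf_def BL_def i'_def y by (simp add: algebra_simps)
      then show ?thesis unfolding s by (rule mod3_eq)
    next
      case jf: False
      define j' where "j' = j - 32"
      have j': "j' < 32" using j jf j'_def by simp
      have "(\<Sum>l<32. u l * genIW l j) = (\<Sum>l<32. - x * (W32_23 i' l * W32_23 j' l))"
      proof (rule sum.cong)
        fix l :: nat assume l: "l \<in> {..<32}"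
        then have "W32_23 l j' = - W32_23 j' l" using W_skew[OF j'] by simp
        then show "u l * genIW l j = - x * (W32_23 i' l * W32_23 j' l)"
          unfolding u_def genIW_def using jf l j'_def by simp
      qed simp
      also have "\<dots> = - x * g W32_23 W32_23 i' j'" unfolding g_def by (simp add: sum_distrib_left)
      also have "\<dots> = -23 * x * dl i' j'" using gWW[OF i' j'] by simp
      finally have s: "(\<Sum>l<32. u l * genIW l j) = -23 * x * dl i' j'" .
      have "Xf x y a c d e i j = -23 * x * dl i' j' + 3 * (8 * x * dl i' j' - Y2 c d e i' j')"
        using False jf unfolding Xf_def BR_def i'_def j'_def by (simp add: algebra_simps)
      then show ?thesis unfolding s by (rule mod3_eq)
    qed
  qed
  then show ?thesis unfolding C3_W_def code_gen_def by auto
qed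


lemma int_decomp: "real_of_int (a mod 3) + real_of_int 3 * real_of_int (a div 3) = real_of_int a"
proof -
  have "real_of_int (a mod 3 + 3 * (a div 3)) = real_of_int a" by (simp only: mod_mult_div_eq)
  then show ?thesis by (simp only: of_int_add of_int_mult)
qed

lemma k_decomp:
  fixes k :: nat
  assumes k3: "k \<ge> 3" and nf: "\<not> (\<exists>m1 m2 m3 m4 :: nat. k = 2 ^ m1 * 5 ^ m2 * 7 ^ m3 * 23 ^ m4)"
  shows "\<exists>x q :: int. \<exists>m :: nat. 3 * int k = x^2 + 23*(x+3*q)^2 + 9 * int m"
proof -
  have k4: "k \<noteq> 4"
  proof
    assume "k = 4" then have "k = 2^2 * 5^0 * 7^0 * 23^(0::nat)" by simp
    then show False using nf by blast
  qed
  have k5: "k \<noteq> 5"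
  proof
    assume "k = 5" then have "k = 2^0 * 5^1 * 7^0 * 23^(0::nat)" by simp
    then show False using nf by blast
  qed
  have k7: "k \<noteq> 7"
  proof
    assume "k = 7" then have "k = 2^0 * 5^0 * 7^1 * 23^(0::nat)" by simp
    then show False using nf by blast
  qed
  have k10: "k \<noteq> 10"
  proof
    assume "k = 10" then have "k = 2^1 * 5^1 * 7^0 * 23^(0::nat)" by simp
    then show False using nf by blast
  qed
  have "k mod 3 = 0 \<or> k mod 3 = 1 \<or> k mod 3 = 2" by arith
  then show ?thesis
  proof (elim disjE)
    assume h: "k mod 3 = 0"
    then have "int k = 3 * int (k div 3)" by arith
    then have "3 * int k = 0^2 + 23*(0+3*0)^2 + 9 * int (k div 3)" by simp
    then show ?thesis by blast
  next
    assume h: "k mod 3 = 1"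
    then have "k \<ge> 13" using k3 k4 k7 k10 by arith
    then have "int k = 13 + 3 * int ((k - 13) div 3)" using h by arith
    then have "3 * int k = 4^2 + 23*(4+3*(-1))^2 + 9 * int ((k - 13) div 3)" by simp
    then show ?thesis by blast
  next
    assume h: "k mod 3 = 2"
    then have "k \<ge> 8" using k3 k5 by arith
    then have "int k = 8 + 3 * int ((k - 8) div 3)" using h by arith
    then have "3 * int k = 1^2 + 23*(1+3*0)^2 + 9 * int ((k - 8) div 3)" by simp
    then show ?thesis by blast
  qed
qed

theorem lemma7p1:
  fixes k :: nat
  assumes "k \<ge> 3"
    and "\<not> (\<exists>m1 m2 m3 m4 :: nat. k = 2 ^ m1 * 5 ^ m2 * 7 ^ m3 * 23 ^ m4)"
  shows "has_frame 64 (constrA 3 64 C3_W) (real k)"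
proof -
  obtain x q :: int and m :: nat where xqm: "3 * int k = x^2 + 23*(x+3*q)^2 + 9 * int m"
    using k_decomp[OF assms] by blast
  obtain a' c' d' e' :: nat where m4: "m = a'^2 + c'^2 + d'^2 + e'^2"
    using four_squares by blast
  define a where "a = int a'"
  define c where "c = int c'"
  define d where "d = int d'"
  define e where "e = int e'"
  define y where "y = x + 3 * q"
  have N: "x^2 + 23*y^2 + 9*(a^2+c^2+d^2+e^2) = 3 * int k"
    using xqm m4 unfolding y_def a_def c_def d_def e_def by simp
  define X where "X = Xf x y a c d e"
  define f where "f = (\<lambda>i j. if j < 64 then real_of_int (X i j) / sqrt 3 else 0)"
  have mem: "\<forall>i<64. f i \<in> constrA 3 64 C3_W"
  proof (intro allI impI)
    fix i :: nat assume i: "i < 64"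
    have cm: "(\<lambda>j. if j < 64 then X i j mod 3 else 0) \<in> C3_W"
      unfolding X_def using code_mem[OF y_def i] .
    show "f i \<in> constrA 3 64 C3_W"
      unfolding constrA_def
    proof (intro CollectI bexI[OF _ cm] exI[of _ "\<lambda>j. X i j div 3"] conjI allI impI)
      fix j :: nat assume j: "j < 64"
      show "f i j = (real_of_int (if j < 64 then X i j mod 3 else 0) + real_of_int 3 * real_of_int (X i j div 3)) / sqrt (real_of_int 3)"
        using j int_decomp[of "X i j"] unfolding f_def by simp
    next
      fix j :: nat assume j: "64 \<le> j"
      show "f i j = 0" using j unfolding f_def by simp
    qed
  qed
  have inn: "\<forall>i<64. \<forall>j<64. inner_N 64 (f i) (f j) = (if i = j then real k else 0)"
  proof (intro allI impI)
    fix i j :: nat assume i: "i < 64" and j: "j < 64"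
    have s3: "sqrt 3 * sqrt 3 = (3::real)" by simp
    have "inner_N 64 (f i) (f j) = (\<Sum>l<64. real_of_int (X i l * X j l) / 3)"
      unfolding inner_N_def
    proof (rule sum.cong)
      fix l :: nat assume "l \<in> {..<64}"
      then show "f i l * f j l = real_of_int (X i l * X j l) / 3"
        unfolding f_def using s3 by (simp add: field_simps)
    qed simp
    also have "\<dots> = real_of_int (\<Sum>l<64. X i l * X j l) / 3"
      by (simp add: sum_divide_distrib)
    also have "(\<Sum>l<64. X i l * X j l) = (3 * int k) * (if i = j then 1 else 0)"
      unfolding X_def using Xgram[OF i j, of x y a c d e] N by simp
    finally show "inner_N 64 (f i) (f j) = (if i = j then real k else 0)" by simp
  qed
  show ?thesis unfolding has_frame_def using mem inn by blast
qed

end
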